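(* Define the bilinear forms on $\mathbb{R}^E$ $$\Omega(u,w)=\sum_\alpha\big(\langle c_\alpha,u\rangle\langle e_\alpha,w\rangle-\langle e_\alpha,u\rangle\langle c_\alpha,w\rangle\big),\qquad {*\Omega}(u,w)=\sum_\mu\big(\langle c_\mu,u\rangle\langle e_\mu,w\rangle-\langle e_\mu,u\rangle\langle c_\mu,w\rangle\big).$$ Then $\Omega={*\Omega}$.
   Context: Setup. Let $G=(V,E)$ be a finite connected graph with oriented edges (loops and multiple edges allowed), with edge space $\mathbb{R}^{E}$ carrying the Euclidean inner product $\langle\cdot,\cdot\rangle$, each edge identified with its standard basis vector. Fix a spanning tree $T\subseteq E$ of the underlying undirected graph. Edges in $T$ are cochords $e_\mu$, $\mu=1,\dots,|V|-1$; edges not in $T$ are chords $e_\alpha$, $\alpha=|V|,\dots,|E|$. For a chord $e_\alpha$, $T\cup\{e_\alpha\}$ contains a unique cycle; $c_\alpha\in\mathbb{R}^E$ has entry $+1$ (resp. $-1$) on each edge of this cycle whose orientation agrees (resp. disagrees) with traversal of the cycle in the direction of $e_\alpha$, and $0$ elsewhere. For a cochord $e_\mu$, $T\setminus\{e_\mu\}$ has two components; let $S_\mu$ be the vertex set of the component containing the tail of $e_\mu$; $c_\mu\in\mathbb{R}^E$ has entry $+1$ on edges with tail in $S_\mu$ and head not in $S_\mu$, $-1$ on edges with head in $S_\mu$ and tail not in $S_\mu$, and $0$ elsewhere. *)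

theory Defs
  imports Complex_Main
begin

text \<open>An oriented graph with vertex set V, edge set E and tail/head maps
(loops and multiple edges allowed).  A step of an undirected walk is a pair
(e, d): d = True traverses e from its tail to its head, d = False backwards.\<close>

definition step_src :: "('e \<Rightarrow> 'v) \<Rightarrow> ('e \<Rightarrow> 'v) \<Rightarrow> 'e \<times> bool \<Rightarrow> 'v" where
  "step_src tail head s = (if snd s then tail (fst s) else head (fst s))"

definition step_dst :: "('e \<Rightarrow> 'v) \<Rightarrow> ('e \<Rightarrow> 'v) \<Rightarrow> 'e \<times> bool \<Rightarrow> 'v" where
  "step_dst tail head s = (if snd s then head (fst s) else tail (fst s))"

fun is_walk :: "('e \<Rightarrow> 'v) \<Rightarrow> ('e \<Rightarrow> 'v) \<Rightarrow> 'e set \<Rightarrow> 'v \<Rightarrow> ('e \<times> bool) list \<Rightarrow> 'v \<Rightarrow> bool" where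
  "is_walk tail head S u [] v = (u = v)"
| "is_walk tail head S u (s # ws) v =
     (fst s \<in> S \<and> step_src tail head s = u \<and> is_walk tail head S (step_dst tail head s) ws v)"

definition walk_verts :: "('e \<Rightarrow> 'v) \<Rightarrow> ('e \<Rightarrow> 'v) \<Rightarrow> 'v \<Rightarrow> ('e \<times> bool) list \<Rightarrow> 'v list" where
  "walk_verts tail head u ws = u # map (step_dst tail head) ws"

text \<open>A cycle in S based at u: nonempty closed walk, with pairwise distinct edges and
pairwise distinct vertices apart from the repeated base point (loops are 1-cycles,
two parallel edges form a 2-cycle).\<close>
definition is_cycle :: "('e \<Rightarrow> 'v) \<Rightarrow> ('e \<Rightarrow> 'v) \<Rightarrow> 'e set \<Rightarrow> 'v \<Rightarrow> ('e \<times> bool) list \<Rightarrow> bool" where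
  "is_cycle tail head S u ws \<longleftrightarrow> ws \<noteq> [] \<and> is_walk tail head S u ws u \<and> distinct (map fst ws)
      \<and> distinct (List.tl (walk_verts tail head u ws))"

definition connected_by :: "'v set \<Rightarrow> ('e \<Rightarrow> 'v) \<Rightarrow> ('e \<Rightarrow> 'v) \<Rightarrow> 'e set \<Rightarrow> bool" where
  "connected_by V tail head S \<longleftrightarrow> (\<forall>u\<in>V. \<forall>v\<in>V. \<exists>ws. is_walk tail head S u ws v)"

definition graph :: "'v set \<Rightarrow> 'e set \<Rightarrow> ('e \<Rightarrow> 'v) \<Rightarrow> ('e \<Rightarrow> 'v) \<Rightarrow> bool" where
  "graph V E tail head \<longleftrightarrow> finite V \<and> finite E \<and> V \<noteq> {} \<and> (\<forall>e\<in>E. tail e \<in> V \<and> head e \<in> V)"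

definition spanning_tree :: "'v set \<Rightarrow> 'e set \<Rightarrow> ('e \<Rightarrow> 'v) \<Rightarrow> ('e \<Rightarrow> 'v) \<Rightarrow> 'e set \<Rightarrow> bool" where
  "spanning_tree V E tail head T \<longleftrightarrow> T \<subseteq> E \<and> connected_by V tail head T
      \<and> \<not> (\<exists>u ws. is_cycle tail head T u ws)"

definition edge_inner :: "'e set \<Rightarrow> ('e \<Rightarrow> real) \<Rightarrow> ('e \<Rightarrow> real) \<Rightarrow> real" where
  "edge_inner E u w = (\<Sum>f\<in>E. u f * w f)"

definition basis_vec :: "'e \<Rightarrow> 'e \<Rightarrow> real" where
  "basis_vec e = (\<lambda>f. if f = e then 1 else 0)"

text \<open>Fundamental cycle vector of a chord a: the unique cycle of T \<union> {a}, traversed in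
the direction of a (i.e. starting at the tail of a with the step (a, True)).\<close>
definition chord_vec :: "('e \<Rightarrow> 'v) \<Rightarrow> ('e \<Rightarrow> 'v) \<Rightarrow> 'e set \<Rightarrow> 'e \<Rightarrow> 'e \<Rightarrow> real" where
  "chord_vec tail head T a =
     (let ws = (SOME ws. is_cycle tail head (T \<union> {a}) (tail a) ws \<and> List.hd ws = (a, True))
      in (\<lambda>f. if (f, True) \<in> set ws then 1 else if (f, False) \<in> set ws then -1 else 0))"

definition cochord_side :: "'v set \<Rightarrow> ('e \<Rightarrow> 'v) \<Rightarrow> ('e \<Rightarrow> 'v) \<Rightarrow> 'e set \<Rightarrow> 'e \<Rightarrow> 'v set" where
  "cochord_side V tail head T m = {v\<in>V. \<exists>ws. is_walk tail head (T - {m}) (tail m) ws v}"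

definition cochord_vec :: "'v set \<Rightarrow> 'e set \<Rightarrow> ('e \<Rightarrow> 'v) \<Rightarrow> ('e \<Rightarrow> 'v) \<Rightarrow> 'e set \<Rightarrow> 'e \<Rightarrow> 'e \<Rightarrow> real" where
  "cochord_vec V E tail head T m =
     (let S = cochord_side V tail head T m
      in (\<lambda>f. if f \<in> E \<and> tail f \<in> S \<and> head f \<notin> S then 1
              else if f \<in> E \<and> head f \<in> S \<and> tail f \<notin> S then -1 else 0))"

definition Omega :: "'v set \<Rightarrow> 'e set \<Rightarrow> ('e \<Rightarrow> 'v) \<Rightarrow> ('e \<Rightarrow> 'v) \<Rightarrow> 'e set
                     \<Rightarrow> ('e \<Rightarrow> real) \<Rightarrow> ('e \<Rightarrow> real) \<Rightarrow> real" where
  "Omega V E tail head T u w =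
     (\<Sum>a\<in>E - T. edge_inner E (chord_vec tail head T a) u * edge_inner E (basis_vec a) w
                 - edge_inner E (basis_vec a) u * edge_inner E (chord_vec tail head T a) w)"

definition star_Omega :: "'v set \<Rightarrow> 'e set \<Rightarrow> ('e \<Rightarrow> 'v) \<Rightarrow> ('e \<Rightarrow> 'v) \<Rightarrow> 'e set
                     \<Rightarrow> ('e \<Rightarrow> real) \<Rightarrow> ('e \<Rightarrow> real) \<Rightarrow> real" where
  "star_Omega V E tail head T u w =
     (\<Sum>m\<in>T. edge_inner E (cochord_vec V E tail head T m) u * edge_inner E (basis_vec m) w
             - edge_inner E (basis_vec m) u * edge_inner E (cochord_vec V E tail head T m) w)"

end

theory Submission
  imports Defs
begin

lemma is_walk_append:
  "is_walk tail head S u (xs @ ys) v \<longleftrightarrow> (\<exists>w. is_walk tail head S u xs w \<and> is_walk tail head S w ys v)"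
  by (induction xs arbitrary: u) auto

lemma is_walk_mono: "is_walk tail head S u ws v \<Longrightarrow> S \<subseteq> S' \<Longrightarrow> is_walk tail head S' u ws v"
  by (induction ws arbitrary: u) auto

lemma is_walk_edges: "is_walk tail head S u ws v \<Longrightarrow> fst ` set ws \<subseteq> S"
  by (induction ws arbitrary: u) auto

lemma walk_verts_Cons: "walk_verts tail head u (s # ws) = u # walk_verts tail head (step_dst tail head s) ws"
  by (simp add: walk_verts_def)

lemma walk_verts_hd: "x \<in> set (walk_verts tail head x ps)"
  by (simp add: walk_verts_def)

lemma walk_suffix:
  "is_walk tail head S x ps v \<Longrightarrow> distinct (walk_verts tail head x ps) \<Longrightarrow> u \<in> set (walk_verts tail head x ps)
   \<Longrightarrow> \<exists>ps2. is_walk tail head S u ps2 v \<and> distinct (walk_verts tail head u ps2)"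
proof (induction ps arbitrary: x)
  case Nil
  then show ?case by (intro exI[of _ "[]"]) (auto simp: walk_verts_def)
next
  case (Cons t ps)
  show ?case
  proof (cases "u = x")
    case True
    then show ?thesis using Cons.prems by blast
  next
    case False
    then have "u \<in> set (walk_verts tail head (step_dst tail head t) ps)" using Cons.prems(3) by (simp add: walk_verts_Cons)
    moreover have "distinct (walk_verts tail head (step_dst tail head t) ps)" using Cons.prems(2) by (simp add: walk_verts_Cons)
    moreover have "is_walk tail head S (step_dst tail head t) ps v" using Cons.prems(1) by simp
    ultimately show ?thesis using Cons.IH by blast
  qed
qed

lemma walk_to_path:
  "is_walk tail head S u ws v \<Longrightarrow> \<exists>ps. is_walk tail head S u ps v \<and> distinct (walk_verts tail head u ps)"
proof (induction ws arbitrary: u)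
  case Nil
  then show ?case by (intro exI[of _ "[]"]) (auto simp: walk_verts_def)
next
  case (Cons s ws)
  then have w: "is_walk tail head S (step_dst tail head s) ws v" and s: "fst s \<in> S" "step_src tail head s = u" by auto
  from Cons.IH[OF w] obtain ps where ps: "is_walk tail head S (step_dst tail head s) ps v"
    "distinct (walk_verts tail head (step_dst tail head s) ps)" by blast
  show ?case
  proof (cases "u \<in> set (walk_verts tail head (step_dst tail head s) ps)")
    case True
    from walk_suffix[OF ps True] show ?thesis by blast
  next
    case False
    then have "is_walk tail head S u (s # ps) v \<and> distinct (walk_verts tail head u (s # ps))"
      using ps s by (simp add: walk_verts_Cons)
    then show ?thesis by blast
  qed
qed

lemma walk_step_verts:
  "is_walk tail head S x ps v \<Longrightarrow> s \<in> set ps \<Longrightarrow>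
   step_src tail head s \<in> set (walk_verts tail head x ps) \<and> step_dst tail head s \<in> set (walk_verts tail head x ps)"
  by (induction ps arbitrary: x) (auto simp: walk_verts_Cons walk_verts_hd)

lemma path_distinct_edges:
  "is_walk tail head S x ps v \<Longrightarrow> distinct (walk_verts tail head x ps) \<Longrightarrow> distinct (map fst ps)"
proof (induction ps arbitrary: x)
  case Nil then show ?case by simp
next
  case (Cons t ps)
  let ?y = "step_dst tail head t"
  have w: "is_walk tail head S ?y ps v" and src: "step_src tail head t = x" using Cons.prems(1) by auto
  have d: "distinct (walk_verts tail head ?y ps)" "x \<notin> set (walk_verts tail head ?y ps)"
    using Cons.prems(2) by (auto simp: walk_verts_Cons)
  have "fst t \<notin> fst ` set ps"
  proof
    assume "fst t \<in> fst ` set ps"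
    then obtain s where s: "s \<in> set ps" "fst s = fst t" by auto
    have "step_src tail head s = x \<or> step_dst tail head s = x"
      using s(2) src by (auto simp: step_src_def step_dst_def split: if_splits)
    then show False using walk_step_verts[OF w s(1)] d(2) by auto
  qed
  then show ?case using Cons.IH[OF w d(1)] by simp
qed

lemma walk_telescope:
  "is_walk tail head S u ws v \<Longrightarrow>
   (\<Sum>s\<leftarrow>ws. (c (step_src tail head s) - c (step_dst tail head s))) = c u - (c v :: real)"
  by (induction ws arbitrary: u) auto

lemma cochord_side_props:
  assumes G: "graph V E tail head" and ST: "spanning_tree V E tail head T" and m: "m \<in> T"
  shows "tail m \<in> cochord_side V tail head T m" "head m \<notin> cochord_side V tail head T m"
    "\<And>f. f \<in> T - {m} \<Longrightarrow> tail f \<in> cochord_side V tail head T m \<longleftrightarrow> head f \<in> cochord_side V tail head T m"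
proof -
  have TE: "T \<subseteq> E" using ST by (simp add: spanning_tree_def)
  have V: "tail f \<in> V" "head f \<in> V" if "f \<in> T" for f using G TE that by (auto simp: graph_def)
  show "tail m \<in> cochord_side V tail head T m"
    using V[OF m] by (auto simp: cochord_side_def intro: exI[of _ "[]"])
  show "head m \<notin> cochord_side V tail head T m"
  proof
    assume "head m \<in> cochord_side V tail head T m"
    then obtain ws where "is_walk tail head (T - {m}) (tail m) ws (head m)" by (auto simp: cochord_side_def)
    from walk_to_path[OF this] obtain ps where ps: "is_walk tail head (T - {m}) (tail m) ps (head m)"
      "distinct (walk_verts tail head (tail m) ps)" by blast
    let ?cyc = "ps @ [(m, False)]"
    have "is_cycle tail head T (tail m) ?cyc"
      unfolding is_cycle_def
    proof (intro conjI)
      show "?cyc \<noteq> []" by simp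
      have "is_walk tail head T (tail m) ps (head m)" using is_walk_mono[OF ps(1)] by blast
      moreover have "is_walk tail head T (head m) [(m, False)] (tail m)"
        using m by (simp add: step_src_def step_dst_def)
      ultimately show "is_walk tail head T (tail m) ?cyc (tail m)" by (auto simp: is_walk_append)
      have "m \<notin> fst ` set ps" using is_walk_edges[OF ps(1)] by auto
      then show "distinct (map fst ?cyc)" using path_distinct_edges[OF ps] by auto
      show "distinct (List.tl (walk_verts tail head (tail m) ?cyc))"
        using ps(2) by (auto simp: walk_verts_def step_dst_def)
    qed
    then show False using ST by (auto simp: spanning_tree_def)
  qed
  fix f assume f: "f \<in> T - {m}"
  show "tail f \<in> cochord_side V tail head T m \<longleftrightarrow> head f \<in> cochord_side V tail head T m"
  proof
    assume "tail f \<in> cochord_side V tail head T m"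
    then obtain ws where "is_walk tail head (T - {m}) (tail m) ws (tail f)" by (auto simp: cochord_side_def)
    then have "is_walk tail head (T - {m}) (tail m) (ws @ [(f, True)]) (head f)"
      using f by (auto simp: is_walk_append step_src_def step_dst_def)
    then show "head f \<in> cochord_side V tail head T m" using V f by (auto simp: cochord_side_def)
  next
    assume "head f \<in> cochord_side V tail head T m"
    then obtain ws where "is_walk tail head (T - {m}) (tail m) ws (head f)" by (auto simp: cochord_side_def)
    then have "is_walk tail head (T - {m}) (tail m) (ws @ [(f, False)]) (tail f)"
      using f by (auto simp: is_walk_append step_src_def step_dst_def)
    then show "tail f \<in> cochord_side V tail head T m" using V f by (auto simp: cochord_side_def)
  qed
qed

lemma cochord_vec_props:
  assumes G: "graph V E tail head" and ST: "spanning_tree V E tail head T" and m: "m \<in> T"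
  shows "cochord_vec V E tail head T m m = 1"
    "\<And>f. f \<in> T - {m} \<Longrightarrow> cochord_vec V E tail head T m f = 0"
proof -
  have TE: "T \<subseteq> E" using ST by (simp add: spanning_tree_def)
  show "cochord_vec V E tail head T m m = 1"
    using cochord_side_props(1,2)[OF G ST m] m TE by (auto simp: cochord_vec_def Let_def)
  fix f assume f: "f \<in> T - {m}"
  show "cochord_vec V E tail head T m f = 0"
    using cochord_side_props(3)[OF G ST m f] by (auto simp: cochord_vec_def Let_def)
qed

lemma chord_cycle_exists:
  assumes G: "graph V E tail head" and ST: "spanning_tree V E tail head T" and a: "a \<in> E - T"
  shows "\<exists>ws. is_cycle tail head (T \<union> {a}) (tail a) ws \<and> List.hd ws = (a, True)"
proof -
  have "tail a \<in> V" "head a \<in> V" using G a by (auto simp: graph_def)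
  then obtain ws where "is_walk tail head T (head a) ws (tail a)"
    using ST unfolding spanning_tree_def connected_by_def by blast
  from walk_to_path[OF this] obtain ps where ps: "is_walk tail head T (head a) ps (tail a)"
      "distinct (walk_verts tail head (head a) ps)" by blast
  have "is_cycle tail head (T \<union> {a}) (tail a) ((a, True) # ps)"
    unfolding is_cycle_def
  proof (intro conjI)
    show "(a, True) # ps \<noteq> []" by simp
    show "is_walk tail head (T \<union> {a}) (tail a) ((a, True) # ps) (tail a)"
      using is_walk_mono[OF ps(1), of "T \<union> {a}"] by (auto simp: step_src_def step_dst_def)
    have "a \<notin> fst ` set ps" using is_walk_edges[OF ps(1)] a by auto
    then show "distinct (map fst ((a, True) # ps))" using path_distinct_edges[OF ps] by auto
    show "distinct (List.tl (walk_verts tail head (tail a) ((a, True) # ps)))"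
      using ps(2) by (simp add: walk_verts_Cons step_dst_def)
  qed
  then show ?thesis by force
qed


lemma chord_props:
  assumes G: "graph V E tail head" and ST: "spanning_tree V E tail head T" and a: "a \<in> E - T"
  shows "chord_vec tail head T a a = 1"
    and "\<And>f. f \<notin> T \<Longrightarrow> f \<noteq> a \<Longrightarrow> chord_vec tail head T a f = 0"
    and "\<And>m. m \<in> T \<Longrightarrow> cochord_vec V E tail head T m a = - chord_vec tail head T a m"
proof -
  define ws where "ws = (SOME ws. is_cycle tail head (T \<union> {a}) (tail a) ws \<and> List.hd ws = (a, True))"
  have ws: "is_cycle tail head (T \<union> {a}) (tail a) ws \<and> List.hd ws = (a, True)"
    unfolding ws_def by (rule someI_ex[OF chord_cycle_exists[OF G ST a]])
  have C: "chord_vec tail head T a = (\<lambda>f. if (f, True) \<in> set ws then 1 else if (f, False) \<in> set ws then -1 else 0)"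
    unfolding chord_vec_def Let_def ws_def ..
  have ne: "ws \<noteq> []" and wk: "is_walk tail head (T \<union> {a}) (tail a) ws (tail a)" and dfst: "distinct (map fst ws)"
    using ws by (auto simp: is_cycle_def)
  have aT: "(a, True) \<in> set ws" using ne ws by (cases ws) auto
  have edges: "fst ` set ws \<subseteq> T \<union> {a}" using is_walk_edges[OF wk] .
  have inj: "inj_on fst (set ws)" using dfst by (simp add: distinct_map)
  have TE: "T \<subseteq> E" using ST by (simp add: spanning_tree_def)
  have fT: "finite T" using G TE finite_subset by (auto simp: graph_def)
  have aE: "a \<in> E" using a by simp
  have zero: "chord_vec tail head T a f = 0" if "f \<notin> fst ` set ws" for f
  proof -
    have "(f,True) \<notin> set ws" "(f,False) \<notin> set ws" using that by (metis fst_conv image_eqI)+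
    then show ?thesis using C by simp
  qed
  show C1: "chord_vec tail head T a a = 1" using aT C by simp
  show "\<And>f. f \<notin> T \<Longrightarrow> f \<noteq> a \<Longrightarrow> chord_vec tail head T a f = 0"
    using zero edges by blast
  show "cochord_vec V E tail head T m a = - chord_vec tail head T a m" if m: "m \<in> T" for m
  proof -
    define S where "S = cochord_side V tail head T m"
    define K where "K = cochord_vec V E tail head T m"
    define c :: "'a \<Rightarrow> real" where "c v = (if v \<in> S then 1 else 0)" for v
    have Kc: "K f = c (tail f) - c (head f)" if "f \<in> E" for f
      using that unfolding K_def cochord_vec_def Let_def S_def[symmetric] c_def by auto
    have K0: "K f = 0" if "f \<in> T - {m}" for f
      using cochord_vec_props(2)[OF G ST m that] unfolding K_def .
    have Km: "K m = 1" using cochord_vec_props(1)[OF G ST m] unfolding K_def .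
    define h where "h f = chord_vec tail head T a f * K f" for f
    define g where "g s = c (step_src tail head s) - c (step_dst tail head s)" for s
    have "sum_list (map g ws) = 0" using walk_telescope[OF wk, of c] unfolding g_def by simp
    moreover have "sum_list (map g ws) = sum g (set ws)"
      using dfst by (simp add: distinct_map sum_list_distinct_conv_sum_set)
    moreover have "sum g (set ws) = sum h (fst ` set ws)"
    proof -
      have "sum g (set ws) = sum (h \<circ> fst) (set ws)"
      proof (rule sum.cong[OF refl])
        fix s assume s: "s \<in> set ws"
        obtain f d where sfd: "s = (f, d)" by (cases s)
        have fE: "f \<in> E" using edges s sfd TE aE by force
        show "g s = (h \<circ> fst) s"
        proof (cases d)
          case True then show ?thesis using s sfd C Kc[OF fE] by (simp add: g_def h_def step_src_def step_dst_def)
        next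
          case False
          have "(f, True) \<notin> set ws" using inj_onD[OF inj, of "(f,True)" "(f,False)"] s sfd False by auto
          then show ?thesis using s sfd False C Kc[OF fE] by (simp add: g_def h_def step_src_def step_dst_def)
        qed
      qed
      also have "\<dots> = sum h (fst ` set ws)" by (simp add: sum.reindex[OF inj])
      finally show ?thesis .
    qed
    moreover have "sum h (fst ` set ws) = sum h (T \<union> {a})"
      by (rule sum.mono_neutral_left) (use fT edges zero in \<open>auto simp: h_def\<close>)
    moreover have "sum h (T \<union> {a}) = K a + chord_vec tail head T a m"
    proof -
      have "sum h (T \<union> {a}) = h a + sum h T" using fT a by simp
      also have "sum h T = h m + sum h (T - {m})" using fT m by (simp add: sum.remove)
      also have "sum h (T - {m}) = 0" using K0 by (simp add: h_def)
      finally show ?thesis using C1 Km by (simp add: h_def)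
    qed
    ultimately show ?thesis unfolding K_def by linarith
  qed
qed

theorem theorem4:
  fixes V :: "'v set" and E :: "'e set" and tail head :: "'e \<Rightarrow> 'v" and T :: "'e set"
  assumes "graph V E tail head"
    and "connected_by V tail head E"
    and "spanning_tree V E tail head T"
  shows "Omega V E tail head T = star_Omega V E tail head T"
proof (intro ext)
  fix u w :: "'e \<Rightarrow> real"
  note G = assms(1) and ST = assms(3)
  have fE: "finite E" using G by (simp add: graph_def)
  have TE: "T \<subseteq> E" using ST by (simp add: spanning_tree_def)
  have fT: "finite T" using fE TE finite_subset by blast
  define C where "C = chord_vec tail head T"
  define K where "K = cochord_vec V E tail head T"
  have basis: "edge_inner E (basis_vec x) z = z x" if "x \<in> E" for x and z :: "'e \<Rightarrow> real"
    proof -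
    have "(\<Sum>f\<in>E. basis_vec x f * z f) = (\<Sum>f\<in>E. if f = x then z f else 0)"
      by (rule sum.cong) (auto simp: basis_vec_def)
    then show ?thesis using that fE by (simp add: edge_inner_def)
  qed
  have Ci: "edge_inner E (C a) z = z a + (\<Sum>m\<in>T. C a m * z m)" if a: "a \<in> E - T" for a and z :: "'e \<Rightarrow> real"
  proof -
    have "edge_inner E (C a) z = (\<Sum>f\<in>E - T. C a f * z f) + (\<Sum>f\<in>T. C a f * z f)"
      unfolding edge_inner_def using sum.subset_diff[OF TE fE] .
    also have "(\<Sum>f\<in>E - T. C a f * z f) = C a a * z a + (\<Sum>f\<in>E - T - {a}. C a f * z f)"
      using fE a by (simp add: sum.remove)
    also have "(\<Sum>f\<in>E - T - {a}. C a f * z f) = 0"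
      using chord_props(2)[OF G ST a] by (simp add: C_def)
    finally show ?thesis using chord_props(1)[OF G ST a] by (simp add: C_def)
  qed
  have Ki: "edge_inner E (K m) z = z m + (\<Sum>a\<in>E - T. K m a * z a)" if m: "m \<in> T" for m and z :: "'e \<Rightarrow> real"
  proof -
    have "edge_inner E (K m) z = (\<Sum>f\<in>E - T. K m f * z f) + (\<Sum>f\<in>T. K m f * z f)"
      unfolding edge_inner_def using sum.subset_diff[OF TE fE] .
    also have "(\<Sum>f\<in>T. K m f * z f) = K m m * z m + (\<Sum>f\<in>T - {m}. K m f * z f)"
      using fT m by (simp add: sum.remove)
    also have "(\<Sum>f\<in>T - {m}. K m f * z f) = 0"
      using cochord_vec_props(2)[OF G ST m] by (simp add: K_def)
    finally show ?thesis using cochord_vec_props(1)[OF G ST m] by (simp add: K_def)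
  qed
  have "Omega V E tail head T u w = (\<Sum>a\<in>E - T. \<Sum>m\<in>T. C a m * (u m * w a - u a * w m))"
    unfolding Omega_def C_def[symmetric]
  proof (rule sum.cong[OF refl])
    fix a assume a: "a \<in> E - T"
    show "edge_inner E (C a) u * edge_inner E (basis_vec a) w - edge_inner E (basis_vec a) u * edge_inner E (C a) w
      = (\<Sum>m\<in>T. C a m * (u m * w a - u a * w m))"
      using a by (simp add: Ci basis algebra_simps sum_distrib_left sum_distrib_right sum_subtractf)
  qed
  also have "\<dots> = (\<Sum>m\<in>T. \<Sum>a\<in>E - T. C a m * (u m * w a - u a * w m))" by (rule sum.swap)
  also have "\<dots> = star_Omega V E tail head T u w"
    unfolding star_Omega_def K_def[symmetric]
  proof (rule sum.cong[OF refl])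
    fix m assume m: "m \<in> T"
    have "edge_inner E (K m) u * edge_inner E (basis_vec m) w - edge_inner E (basis_vec m) u * edge_inner E (K m) w
      = (\<Sum>a\<in>E - T. K m a * (u a * w m - u m * w a))"
      using m TE by (simp add: Ki basis algebra_simps sum_distrib_left sum_distrib_right sum_subtractf subsetD)
    also have "\<dots> = (\<Sum>a\<in>E - T. C a m * (u m * w a - u a * w m))"
      using chord_props(3)[OF G ST _ m] by (intro sum.cong) (auto simp: C_def K_def algebra_simps)
    finally show "(\<Sum>a\<in>E - T. C a m * (u m * w a - u a * w m)) =
      edge_inner E (K m) u * edge_inner E (basis_vec m) w - edge_inner E (basis_vec m) u * edge_inner E (K m) w"
      by simp
  qed
  finally show "Omega V E tail head T u w = star_Omega V E tail head T u w" .
qed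

end
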